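(* A fuzzy Archimedean Riesz space has the fuzzy countable sup property if and only if every fuzzy $\sigma$-ideal in it is a fuzzy band.
   Context: A fuzzy order on a real vector space $E$ is a map $\mu:E\times E\to[0,1]$ with $\mu(x,x)=1$; $\mu(x,y)+\mu(y,x)>1$ implies $x=y$; and $\mu(x,z)\ge\sup_{y}\min(\mu(x,y),\mu(y,z))$. Write $x\le y$ for $\mu(x,y)>\frac12$; upper bounds, suprema and infima are taken with respect to this relation. $(E,\mu)$ is a fuzzy ordered linear space if $\mu(x_1,x_2)>\frac12$ implies $\mu(x_1,x_2)\le\mu(x_1+x,x_2+x)$ for all $x$ and $\mu(x_1,x_2)\le\mu(\alpha x_1,\alpha x_2)$ for all $\alpha>0$; it is a fuzzy Riesz space if $x\vee y=\sup\{x,y\}$, $x\wedge y=\inf\{x,y\}$ exist for all $x,y$. $|x|=x\vee(-x)$. A fuzzy Riesz space is fuzzy Archimedean if for every nonzero $x$ with $0\le x$ the set $\{\lambda x:\lambda>0\}$ is not bounded above. It has the fuzzy countable sup property if whenever $\sup A$ exists for a subset $A$, there is an at most countable $B\subseteq A$ with $\sup B=\sup A$. A fuzzy ideal is a vector subspace $A$ such that $\mu(|x|,|y|)>\frac12$ and $y\in A$ imply $x\in A$; it is a fuzzy $\sigma$-ideal if $0\le x_n\in A$, $x_n\uparrow x$ (increasing with supremum $x$) imply $x\in A$; it is a fuzzy band if it contains the supremum of each of its subsets whose supremum exists in the space. *)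

theory Defs
  imports "HOL-Analysis.Analysis"
begin

text \<open>The transitivity condition mu(x,z) >= sup_y min(mu(x,y),mu(y,z)) is written
  pointwise in y (equivalent to the sup form since the values are bounded).\<close>
definition fuzzy_order :: "('a \<Rightarrow> 'a \<Rightarrow> real) \<Rightarrow> bool" where
  "fuzzy_order \<mu> \<longleftrightarrow>
     (\<forall>x y. 0 \<le> \<mu> x y \<and> \<mu> x y \<le> 1) \<and>
     (\<forall>x. \<mu> x x = 1) \<and>
     (\<forall>x y. \<mu> x y + \<mu> y x > 1 \<longrightarrow> x = y) \<and>
     (\<forall>x y z. \<mu> x z \<ge> min (\<mu> x y) (\<mu> y z))"

definition fle :: "('a \<Rightarrow> 'a \<Rightarrow> real) \<Rightarrow> 'a \<Rightarrow> 'a \<Rightarrow> bool" where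
  "fle \<mu> x y \<longleftrightarrow> \<mu> x y > 1/2"

definition fub :: "('a \<Rightarrow> 'a \<Rightarrow> real) \<Rightarrow> 'a set \<Rightarrow> 'a \<Rightarrow> bool" where
  "fub \<mu> A u \<longleftrightarrow> (\<forall>a\<in>A. fle \<mu> a u)"

definition flb :: "('a \<Rightarrow> 'a \<Rightarrow> real) \<Rightarrow> 'a set \<Rightarrow> 'a \<Rightarrow> bool" where
  "flb \<mu> A l \<longleftrightarrow> (\<forall>a\<in>A. fle \<mu> l a)"

definition is_fsup :: "('a \<Rightarrow> 'a \<Rightarrow> real) \<Rightarrow> 'a set \<Rightarrow> 'a \<Rightarrow> bool" where
  "is_fsup \<mu> A s \<longleftrightarrow> fub \<mu> A s \<and> (\<forall>u. fub \<mu> A u \<longrightarrow> fle \<mu> s u)"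

definition is_finf :: "('a \<Rightarrow> 'a \<Rightarrow> real) \<Rightarrow> 'a set \<Rightarrow> 'a \<Rightarrow> bool" where
  "is_finf \<mu> A i \<longleftrightarrow> flb \<mu> A i \<and> (\<forall>l. flb \<mu> A l \<longrightarrow> fle \<mu> l i)"

definition fsup :: "('a \<Rightarrow> 'a \<Rightarrow> real) \<Rightarrow> 'a set \<Rightarrow> 'a" where
  "fsup \<mu> A = (THE s. is_fsup \<mu> A s)"

definition fuzzy_ordered_linear_space :: "('a::real_vector \<Rightarrow> 'a \<Rightarrow> real) \<Rightarrow> bool" where
  "fuzzy_ordered_linear_space \<mu> \<longleftrightarrow> fuzzy_order \<mu> \<and>
     (\<forall>x1 x2. \<mu> x1 x2 > 1/2 \<longrightarrow>
        (\<forall>x. \<mu> x1 x2 \<le> \<mu> (x1 + x) (x2 + x)) \<and>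
        (\<forall>\<alpha>::real. \<alpha> > 0 \<longrightarrow> \<mu> x1 x2 \<le> \<mu> (\<alpha> *\<^sub>R x1) (\<alpha> *\<^sub>R x2)))"

definition fuzzy_riesz_space :: "('a::real_vector \<Rightarrow> 'a \<Rightarrow> real) \<Rightarrow> bool" where
  "fuzzy_riesz_space \<mu> \<longleftrightarrow> fuzzy_ordered_linear_space \<mu> \<and>
     (\<forall>x y. (\<exists>s. is_fsup \<mu> {x, y} s) \<and> (\<exists>i. is_finf \<mu> {x, y} i))"

definition fabs :: "('a::real_vector \<Rightarrow> 'a \<Rightarrow> real) \<Rightarrow> 'a \<Rightarrow> 'a" where
  "fabs \<mu> x = fsup \<mu> {x, -x}"

definition fuzzy_archimedean :: "('a::real_vector \<Rightarrow> 'a \<Rightarrow> real) \<Rightarrow> bool" where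
  "fuzzy_archimedean \<mu> \<longleftrightarrow>
     (\<forall>x. x \<noteq> 0 \<and> fle \<mu> 0 x \<longrightarrow> \<not> (\<exists>u. fub \<mu> {c *\<^sub>R x | c::real. c > 0} u))"

definition fuzzy_countable_sup :: "('a \<Rightarrow> 'a \<Rightarrow> real) \<Rightarrow> bool" where
  "fuzzy_countable_sup \<mu> \<longleftrightarrow>
     (\<forall>A s. is_fsup \<mu> A s \<longrightarrow> (\<exists>B \<subseteq> A. countable B \<and> is_fsup \<mu> B s))"

definition fuzzy_ideal :: "('a::real_vector \<Rightarrow> 'a \<Rightarrow> real) \<Rightarrow> 'a set \<Rightarrow> bool" where
  "fuzzy_ideal \<mu> A \<longleftrightarrow> subspace A \<and>
     (\<forall>x y. fle \<mu> (fabs \<mu> x) (fabs \<mu> y) \<and> y \<in> A \<longrightarrow> x \<in> A)"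

definition fuzzy_sigma_ideal :: "('a::real_vector \<Rightarrow> 'a \<Rightarrow> real) \<Rightarrow> 'a set \<Rightarrow> bool" where
  "fuzzy_sigma_ideal \<mu> A \<longleftrightarrow> fuzzy_ideal \<mu> A \<and>
     (\<forall>(xs::nat \<Rightarrow> 'a) x. (\<forall>n. fle \<mu> 0 (xs n) \<and> xs n \<in> A) \<and>
        (\<forall>n. fle \<mu> (xs n) (xs (Suc n))) \<and> is_fsup \<mu> (range xs) x \<longrightarrow> x \<in> A)"

definition fuzzy_band :: "('a::real_vector \<Rightarrow> 'a \<Rightarrow> real) \<Rightarrow> 'a set \<Rightarrow> bool" where
  "fuzzy_band \<mu> A \<longleftrightarrow> fuzzy_ideal \<mu> A \<and>
     (\<forall>B s. B \<subseteq> A \<and> is_fsup \<mu> B s \<longrightarrow> s \<in> A)"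

end

theory Submission
  imports Defs
begin



locale FR =
  fixes mu :: "'a::real_vector \<Rightarrow> 'a \<Rightarrow> real"
  assumes R: "fuzzy_riesz_space mu"
begin

abbreviation le :: "'a \<Rightarrow> 'a \<Rightarrow> bool" (infix "\<preceq>" 50) where "x \<preceq> y \<equiv> fle mu x y"

lemma FO: "fuzzy_order mu"
  using R unfolding fuzzy_riesz_space_def fuzzy_ordered_linear_space_def by auto

lemma le_refl[simp]: "x \<preceq> x"
  using FO unfolding fuzzy_order_def fle_def by auto

lemma le_antisym: "x \<preceq> y \<Longrightarrow> y \<preceq> x \<Longrightarrow> x = y"
  using FO unfolding fuzzy_order_def fle_def by force

lemma le_trans: "x \<preceq> y \<Longrightarrow> y \<preceq> z \<Longrightarrow> x \<preceq> z"
proof -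
  assume a: "x \<preceq> y" "y \<preceq> z"
  have "mu x z \<ge> min (mu x y) (mu y z)" using FO unfolding fuzzy_order_def by blast
  then show ?thesis using a unfolding fle_def by linarith
qed

lemma le_add: "x \<preceq> y \<Longrightarrow> x + z \<preceq> y + z"
proof -
  assume a: "x \<preceq> y"
  have "mu x y \<le> mu (x + z) (y + z)" using R a unfolding fuzzy_riesz_space_def fuzzy_ordered_linear_space_def fle_def by blast
  then show ?thesis using a unfolding fle_def by linarith
qed

lemma le_scale: "x \<preceq> y \<Longrightarrow> 0 < c \<Longrightarrow> c *\<^sub>R x \<preceq> c *\<^sub>R y"
proof -
  assume a: "x \<preceq> y" "0 < c"
  have "mu x y \<le> mu (c *\<^sub>R x) (c *\<^sub>R y)" using R a unfolding fuzzy_riesz_space_def fuzzy_ordered_linear_space_def fle_def by blast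
  then show ?thesis using a unfolding fle_def by linarith
qed

lemma le_add_iff: "x + z \<preceq> y + z \<longleftrightarrow> x \<preceq> y"
  using le_add[of "x+z" "y+z" "-z"] le_add[of x y z] by auto

lemma le_add_iff2: "z + x \<preceq> z + y \<longleftrightarrow> x \<preceq> y"
  using le_add_iff[of x z y] by (simp only: add.commute)

lemma le_sub_right: "x \<preceq> w - z \<longleftrightarrow> x + z \<preceq> w"
  using le_add_iff[of x z "w - z"] by simp

lemma le_sub_left: "x - z \<preceq> w \<longleftrightarrow> x \<preceq> w + z"
  using le_add_iff[of "x - z" z w] by simp

lemma le_diff_iff: "x \<preceq> y \<longleftrightarrow> 0 \<preceq> y - x"
  using le_add_iff[of x "-x" y] by simp

lemma le_diff_iff2: "x \<preceq> y \<longleftrightarrow> x - y \<preceq> 0"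
  using le_add_iff[of x "-y" y] by simp

lemma le_neg_iff: "- y \<preceq> - x \<longleftrightarrow> x \<preceq> y"
  using le_add_iff[of "-y" "x + y" "-x"] by (simp add: algebra_simps)

lemma le_add_mono: "a \<preceq> b \<Longrightarrow> c \<preceq> d \<Longrightarrow> a + c \<preceq> b + d"
  by (metis le_add add.commute le_trans)

lemma le_scale_nonneg: "x \<preceq> y \<Longrightarrow> 0 \<le> c \<Longrightarrow> c *\<^sub>R x \<preceq> c *\<^sub>R y"
  by (cases "c = 0") (auto intro: le_scale)

lemma pos_scale: "0 \<preceq> x \<Longrightarrow> 0 \<le> c \<Longrightarrow> 0 \<preceq> c *\<^sub>R x"
  using le_scale_nonneg[of 0 x c] by simp

lemma pos_add: "0 \<preceq> x \<Longrightarrow> 0 \<preceq> y \<Longrightarrow> 0 \<preceq> x + y"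
  using le_add_mono[of 0 x 0 y] by simp

lemma le_add_pos: "0 \<preceq> y \<Longrightarrow> x \<preceq> x + y"
  using le_add_iff2[of x 0 y] by simp

lemma scale_le_scale: "0 \<preceq> x \<Longrightarrow> c \<le> d \<Longrightarrow> c *\<^sub>R x \<preceq> d *\<^sub>R x"
  using pos_scale[of x "d - c"] le_diff_iff[of "c *\<^sub>R x" "d *\<^sub>R x"]
  by (simp add: algebra_simps)

lemma fsup_unique: "is_fsup mu A s \<Longrightarrow> is_fsup mu A t \<Longrightarrow> s = t"
  unfolding is_fsup_def by (blast intro: le_antisym)

lemma fsup_eq: "is_fsup mu A s \<Longrightarrow> fsup mu A = s"
  unfolding fsup_def using fsup_unique by blast

lemma fsup_transl: "is_fsup mu A s \<Longrightarrow> is_fsup mu ((\<lambda>x. x + z) ` A) (s + z)"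
  unfolding is_fsup_def fub_def
proof (intro conjI allI impI ballI)
  assume a: "(\<forall>a\<in>A. a \<preceq> s) \<and> (\<forall>u. (\<forall>a\<in>A. a \<preceq> u) \<longrightarrow> s \<preceq> u)"
  fix b assume "b \<in> (\<lambda>x. x + z) ` A"
  then show "b \<preceq> s + z" using a le_add by auto
next
  fix u assume a: "(\<forall>a\<in>A. a \<preceq> s) \<and> (\<forall>u. (\<forall>a\<in>A. a \<preceq> u) \<longrightarrow> s \<preceq> u)"
    and b: "\<forall>a\<in>(\<lambda>x. x + z) ` A. a \<preceq> u"
  have "\<forall>a\<in>A. a \<preceq> u - z" using b le_add_iff[of _ z "u - z"] by auto
  then have "s \<preceq> u - z" using a by blast
  then show "s + z \<preceq> u" using le_add_iff[of s z "u - z"] by simp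
qed

definition join :: "'a \<Rightarrow> 'a \<Rightarrow> 'a" where "join x y = fsup mu {x, y}"
definition meet :: "'a \<Rightarrow> 'a \<Rightarrow> 'a" where "meet x y = (THE i. is_finf mu {x, y} i)"

lemma join_is: "is_fsup mu {x, y} (join x y)"
proof -
  obtain s where "is_fsup mu {x, y} s" using R unfolding fuzzy_riesz_space_def by blast
  then show ?thesis unfolding join_def using fsup_eq by simp
qed

lemma meet_is: "is_finf mu {x, y} (meet x y)"
proof -
  obtain s where s: "is_finf mu {x, y} s" using R unfolding fuzzy_riesz_space_def by blast
  have "\<And>t. is_finf mu {x, y} t \<Longrightarrow> t = s" using s unfolding is_finf_def by (blast intro: le_antisym)
  then show ?thesis unfolding meet_def using s by (metis theI)
qed

lemma join_le_iff: "join x y \<preceq> z \<longleftrightarrow> x \<preceq> z \<and> y \<preceq> z"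
  using join_is[of x y] unfolding is_fsup_def fub_def by (auto intro: le_trans)

lemma le_meet_iff: "z \<preceq> meet x y \<longleftrightarrow> z \<preceq> x \<and> z \<preceq> y"
  using meet_is[of x y] unfolding is_finf_def flb_def by (auto intro: le_trans)

lemma join_ge1: "x \<preceq> join x y" and join_ge2: "y \<preceq> join x y"
  using join_le_iff[of x y "join x y"] by auto

lemma meet_le1: "meet x y \<preceq> x" and meet_le2: "meet x y \<preceq> y"
  using le_meet_iff[of "meet x y" x y] by auto

lemma join_eqI: "x \<preceq> s \<Longrightarrow> y \<preceq> s \<Longrightarrow> (\<And>z. x \<preceq> z \<Longrightarrow> y \<preceq> z \<Longrightarrow> s \<preceq> z) \<Longrightarrow> join x y = s"
  by (meson join_ge1 join_ge2 join_le_iff le_antisym)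

lemma meet_eqI: "s \<preceq> x \<Longrightarrow> s \<preceq> y \<Longrightarrow> (\<And>z. z \<preceq> x \<Longrightarrow> z \<preceq> y \<Longrightarrow> z \<preceq> s) \<Longrightarrow> meet x y = s"
  by (meson meet_le1 meet_le2 le_meet_iff le_antisym)

lemma meet_comm: "meet x y = meet y x"
  by (rule meet_eqI) (auto simp: meet_le1 meet_le2 le_meet_iff)

lemma join_comm: "join x y = join y x"
  by (rule join_eqI) (auto simp: join_ge1 join_ge2 join_le_iff)

lemma meet_eq_left: "x \<preceq> y \<Longrightarrow> meet x y = x"
  by (rule meet_eqI) auto

lemma join_eq_right: "x \<preceq> y \<Longrightarrow> join x y = y"
  by (rule join_eqI) auto

lemma meet_self[simp]: "meet x x = x" by (simp add: meet_eq_left)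

lemma meet_mono: "a \<preceq> b \<Longrightarrow> meet a e \<preceq> meet b e"
  by (meson le_meet_iff le_trans meet_le1 meet_le2)

lemma meet_mono2: "a \<preceq> b \<Longrightarrow> meet e a \<preceq> meet e b"
  by (meson le_meet_iff le_trans meet_le1 meet_le2)

lemma join_mono: "a \<preceq> b \<Longrightarrow> join a e \<preceq> join b e"
  by (meson join_le_iff le_trans join_ge1 join_ge2)

lemma meet_pos: "0 \<preceq> a \<Longrightarrow> 0 \<preceq> e \<Longrightarrow> 0 \<preceq> meet a e"
  by (simp add: le_meet_iff)

lemma join_add: "join (x + z) (y + z) = join x y + z"
proof (rule join_eqI)
  show "x + z \<preceq> join x y + z" "y + z \<preceq> join x y + z"
    using le_add_iff join_ge1 join_ge2 by auto
  fix w assume "x + z \<preceq> w" "y + z \<preceq> w"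
  then have "x \<preceq> w - z" "y \<preceq> w - z" using le_sub_right by auto
  then have "join x y \<preceq> w - z" by (simp add: join_le_iff)
  then show "join x y + z \<preceq> w" using le_sub_right by auto
qed

lemma meet_add: "meet (x + z) (y + z) = meet x y + z"
proof (rule meet_eqI)
  show "meet x y + z \<preceq> x + z" "meet x y + z \<preceq> y + z"
    using le_add_iff meet_le1 meet_le2 by auto
  fix w assume "w \<preceq> x + z" "w \<preceq> y + z"
  then have "w - z \<preceq> x" "w - z \<preceq> y" using le_sub_left by auto
  then have "w - z \<preceq> meet x y" by (simp add: le_meet_iff)
  then show "w \<preceq> meet x y + z" using le_sub_left by auto
qed

lemma neg_join: "- join x y = meet (- x) (- y)"
proof (rule sym, rule meet_eqI)
  show "- join x y \<preceq> - x" "- join x y \<preceq> - y"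
    using le_neg_iff join_ge1 join_ge2 by auto
  fix w assume "w \<preceq> - x" "w \<preceq> - y"
  then have "x \<preceq> - w" "y \<preceq> - w" using le_neg_iff[of "-x" w] le_neg_iff[of "-y" w] by auto
  then have "join x y \<preceq> - w" by (simp add: join_le_iff)
  then show "w \<preceq> - join x y" using le_neg_iff[of "-w" "join x y"] by simp
qed

lemma join_meet_sum: "join x y + meet x y = x + y"
proof -
  have "meet x y = x + y - join x y"
  proof (rule meet_eqI)
    have "x + y \<preceq> x + join x y" using le_add_iff2[of x y "join x y"] join_ge2
      by blast
    then show "x + y - join x y \<preceq> x" using le_sub_left by auto
    have "x + y \<preceq> join x y + y" using le_add_iff[of x y "join x y"] join_ge1
      by simp
    then have "x + y \<preceq> y + join x y" by (simp add: add.commute)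
    then show "x + y - join x y \<preceq> y" using le_sub_left by auto
    fix z assume z: "z \<preceq> x" "z \<preceq> y"
    have "x + z \<preceq> x + y" using z(2) le_add_iff2 by auto
    then have "x \<preceq> x + y - z" using le_sub_right by auto
    moreover have "z + y \<preceq> x + y" using z(1) le_add_iff by auto
    then have "y \<preceq> x + y - z" using le_sub_right by (simp add: add.commute)
    ultimately have "join x y \<preceq> x + y - z" by (simp add: join_le_iff)
    then have "join x y + z \<preceq> x + y" using le_sub_right by auto
    then have "z + join x y \<preceq> x + y" by (simp add: add.commute)
    then show "z \<preceq> x + y - join x y" using le_sub_right by auto
  qed
  then show ?thesis by simp
qed

end


context FR begin

lemma fabs_eq: "fabs mu x = join x (- x)" by (simp add: fabs_def join_def)

lemma abs_ge1: "x \<preceq> fabs mu x" and abs_ge2: "- x \<preceq> fabs mu x"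
  by (simp_all add: fabs_eq join_ge1 join_ge2)

lemma abs_pos: "0 \<preceq> fabs mu x"
proof -
  have "x + - x \<preceq> fabs mu x + fabs mu x" using le_add_mono[OF abs_ge1 abs_ge2] .
  then have "0 \<preceq> 2 *\<^sub>R fabs mu x" by (simp add: scaleR_2)
  then have "(1/2) *\<^sub>R 0 \<preceq> (1/2) *\<^sub>R (2 *\<^sub>R fabs mu x)" by (rule le_scale) simp
  then show ?thesis by simp
qed

lemma neg_le_zero: "0 \<preceq> x \<Longrightarrow> - x \<preceq> 0"
  using le_neg_iff[of x 0] by simp

lemma abs_of_pos: "0 \<preceq> x \<Longrightarrow> fabs mu x = x"
  unfolding fabs_eq by (rule join_eqI) (auto intro: le_trans neg_le_zero)

lemma abs_le: "x \<preceq> v \<Longrightarrow> - x \<preceq> v \<Longrightarrow> fabs mu x \<preceq> v"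
  by (simp add: fabs_eq join_le_iff)

lemma abs_zero[simp]: "fabs mu 0 = 0" by (simp add: abs_of_pos)

lemma abs_add: "fabs mu (x + y) \<preceq> fabs mu x + fabs mu y"
proof (rule abs_le)
  show "x + y \<preceq> fabs mu x + fabs mu y" by (rule le_add_mono[OF abs_ge1 abs_ge1])
  have "- x + - y \<preceq> fabs mu x + fabs mu y" by (rule le_add_mono[OF abs_ge2 abs_ge2])
  then show "- (x + y) \<preceq> fabs mu x + fabs mu y" by simp
qed

lemma abs_scale: "fabs mu (c *\<^sub>R x) \<preceq> \<bar>c\<bar> *\<^sub>R fabs mu x"
proof (cases "0 \<le> c")
  case True
  show ?thesis
  proof (rule abs_le)
    show "c *\<^sub>R x \<preceq> \<bar>c\<bar> *\<^sub>R fabs mu x" using True le_scale_nonneg[OF abs_ge1 True] by simp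
    show "- (c *\<^sub>R x) \<preceq> \<bar>c\<bar> *\<^sub>R fabs mu x" using True le_scale_nonneg[OF abs_ge2 True] by simp
  qed
next
  case False
  then have c: "0 \<le> - c" by simp
  show ?thesis
  proof (rule abs_le)
    show "c *\<^sub>R x \<preceq> \<bar>c\<bar> *\<^sub>R fabs mu x" using False le_scale_nonneg[OF abs_ge2 c] by simp
    show "- (c *\<^sub>R x) \<preceq> \<bar>c\<bar> *\<^sub>R fabs mu x" using False le_scale_nonneg[OF abs_ge1 c] by simp
  qed
qed

lemma D1: "0 \<preceq> p \<Longrightarrow> meet (p + q) e \<preceq> p + meet q e"
proof -
  assume p: "0 \<preceq> p"
  have "e \<preceq> e + p" using le_add_pos[OF p] .
  then have "meet (p + q) e \<preceq> meet (q + p) (e + p)" using meet_mono2 by (simp add: add.commute)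
  also have "meet (q + p) (e + p) = meet q e + p" by (rule meet_add)
  finally show ?thesis by (simp add: add.commute)
qed

lemma D2: "0 \<preceq> a \<Longrightarrow> 0 \<preceq> b \<Longrightarrow> 0 \<preceq> e \<Longrightarrow> meet a e = 0 \<Longrightarrow> meet b e = 0 \<Longrightarrow> meet (a + b) e = 0"
proof -
  assume a: "0 \<preceq> a" and b: "0 \<preceq> b" and e: "0 \<preceq> e" and ae: "meet a e = 0" and be: "meet b e = 0"
  have "meet (a + b) e \<preceq> a + meet b e" by (rule D1[OF a])
  then have "meet (a + b) e \<preceq> a" using be by simp
  moreover have "meet (a + b) e \<preceq> e" by (rule meet_le2)
  ultimately have "meet (a + b) e \<preceq> meet a e" by (simp add: le_meet_iff)
  then have "meet (a + b) e \<preceq> 0" using ae by simp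
  moreover have "0 \<preceq> meet (a + b) e" using meet_pos[OF pos_add[OF a b] e] .
  ultimately show ?thesis by (rule le_antisym)
qed

lemma D_nat: "0 \<preceq> a \<Longrightarrow> 0 \<preceq> e \<Longrightarrow> meet a e = 0 \<Longrightarrow> meet (real n *\<^sub>R a) e = 0"
proof (induction n)
  case 0
  then show ?case by (simp add: meet_eq_left)
next
  case (Suc n)
  have "meet (real n *\<^sub>R a + a) e = 0"
    using D2[OF pos_scale[OF Suc.prems(1)] Suc.prems(1) Suc.prems(2) Suc.IH[OF Suc.prems] Suc.prems(3)] by simp
  then show ?case by (simp add: algebra_simps)
qed

lemma disj_le: "0 \<preceq> x \<Longrightarrow> 0 \<preceq> e \<Longrightarrow> x \<preceq> y \<Longrightarrow> meet y e = 0 \<Longrightarrow> meet x e = 0"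
  by (metis le_antisym meet_mono meet_pos)

lemma pos_neg_disj: "meet (join p 0) (join (- p) 0) = 0"
proof -
  let ?N = "join (- p) 0"
  have "join p 0 = join (0 + p) (- p + p)" by simp
  also have "\<dots> = join 0 (- p) + p" by (rule join_add)
  also have "\<dots> = p + ?N" by (simp add: join_comm add.commute)
  finally have 1: "join p 0 = p + ?N" .
  have "meet (p + ?N) (0 + ?N) = meet p 0 + ?N" by (rule meet_add)
  moreover have "meet p 0 = - ?N" using neg_join[of "- p" 0] by simp
  ultimately show ?thesis using 1 by simp
qed

lemma disj_bounded: "meet q h = 0 \<Longrightarrow> q \<preceq> c \<Longrightarrow> h \<preceq> c \<Longrightarrow> q + h \<preceq> c"
  using join_meet_sum[of q h] join_le_iff[of q h c] by simp

lemma join_pos: "0 \<preceq> join p 0" by (rule join_ge2)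

end


context FR begin

lemma ideal_solid: "fuzzy_ideal mu A \<Longrightarrow> y \<in> A \<Longrightarrow> fabs mu x \<preceq> fabs mu y \<Longrightarrow> x \<in> A"
  unfolding fuzzy_ideal_def by blast

lemma ideal_sub: "fuzzy_ideal mu A \<Longrightarrow> subspace A"
  unfolding fuzzy_ideal_def by blast

lemma ideal_abs: "fuzzy_ideal mu A \<Longrightarrow> x \<in> A \<Longrightarrow> fabs mu x \<in> A"
  by (rule ideal_solid[of A x]) (simp_all add: abs_of_pos[OF abs_pos])

lemma ideal_join: assumes I: "fuzzy_ideal mu A" and x: "x \<in> A" and y: "y \<in> A"
  shows "join x y \<in> A"
proof -
  let ?s = "fabs mu x + fabs mu y"
  have sA: "?s \<in> A" using subspace_add[OF ideal_sub[OF I] ideal_abs[OF I x] ideal_abs[OF I y]] .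
  have spos: "0 \<preceq> ?s" using pos_add[OF abs_pos abs_pos] .
  have xs: "fabs mu x \<preceq> ?s" using le_add_pos[OF abs_pos] .
  have ys: "fabs mu y \<preceq> ?s" using le_add_pos[OF abs_pos, of "fabs mu y" x] by (simp add: add.commute)
  have "join x y \<preceq> ?s" using le_trans[OF abs_ge1 xs] le_trans[OF abs_ge1 ys] by (simp add: join_le_iff)
  moreover have "- join x y \<preceq> ?s"
  proof -
    have "- join x y \<preceq> - x" using join_ge1 le_neg_iff by blast
    then show ?thesis using le_trans[OF abs_ge2 xs] le_trans by blast
  qed
  ultimately have "fabs mu (join x y) \<preceq> fabs mu ?s" using abs_le abs_of_pos[OF spos] by simp
  then show ?thesis using ideal_solid[OF I sA] by blast
qed

lemma csp_band:
  assumes csp: "fuzzy_countable_sup mu" and si: "fuzzy_sigma_ideal mu A"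
  shows "fuzzy_band mu A"
proof -
  have I: "fuzzy_ideal mu A" using si unfolding fuzzy_sigma_ideal_def by blast
  have sub: "subspace A" using ideal_sub[OF I] .
  have sig: "\<And>xs x. (\<forall>n. 0 \<preceq> xs n \<and> xs n \<in> A) \<Longrightarrow> (\<forall>n. xs n \<preceq> xs (Suc n)) \<Longrightarrow> is_fsup mu (range xs) x \<Longrightarrow> x \<in> A"
    using si unfolding fuzzy_sigma_ideal_def by blast
  show ?thesis unfolding fuzzy_band_def
  proof (intro conjI allI impI)
    show "fuzzy_ideal mu A" by (rule I)
    fix B s assume Bs: "B \<subseteq> A \<and> is_fsup mu B s"
    obtain C where CB: "C \<subseteq> B" and cC: "countable C" and Cs: "is_fsup mu C s"
      using csp Bs unfolding fuzzy_countable_sup_def by blast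
    show "s \<in> A"
    proof (cases "C = {}")
      case True
      then have all: "\<And>u. s \<preceq> u" using Cs unfolding is_fsup_def fub_def by auto
      have "s + 0 \<preceq> s + s" using all by simp
      then have "0 \<preceq> s" using le_add_iff2 by blast
      then have "s = 0" using all[of 0] le_antisym by blast
      then show ?thesis using subspace_0[OF sub] by simp
    next
      case False
      define c where "c = from_nat_into C"
      have rc: "range c = C" unfolding c_def using range_from_nat_into[OF False cC] .
      have cA: "c n \<in> A" for n using rc CB Bs by blast
      have cs: "c n \<preceq> s" for n using Cs rc unfolding is_fsup_def fub_def by blast
      define y where "y = rec_nat (c 0) (\<lambda>n yn. join yn (c (Suc n)))"
      have y0: "y 0 = c 0" by (simp add: y_def)
      have yS: "y (Suc n) = join (y n) (c (Suc n))" for n by (simp add: y_def)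
      have yA: "y n \<in> A" for n
        by (induction n) (simp_all add: y0 yS cA ideal_join[OF I])
      have ymono: "y n \<preceq> y (Suc n)" for n by (simp add: yS join_ge1)
      have cy: "c n \<preceq> y n" for n by (cases n) (simp_all add: y0 yS join_ge2)
      have c0y: "c 0 \<preceq> y n" for n
        by (induction n) (simp_all add: y0, meson le_trans ymono)
      have ys: "y n \<preceq> s" for n
        by (induction n) (simp_all add: y0 yS cs join_le_iff)
      have ysup: "is_fsup mu (range y) s"
        unfolding is_fsup_def fub_def
      proof (intro conjI allI impI ballI)
        fix a assume "a \<in> range y" then show "a \<preceq> s" using ys by auto
      next
        fix v assume v: "\<forall>a\<in>range y. a \<preceq> v"
        have "\<forall>a\<in>C. a \<preceq> v"
        proof
          fix a assume "a \<in> C"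
          then obtain n where "a = c n" using rc by blast
          then show "a \<preceq> v" using cy v le_trans by blast
        qed
        then show "s \<preceq> v" using Cs unfolding is_fsup_def fub_def by blast
      qed
      define xs where "xs n = y n + - c 0" for n
      have rx: "range xs = (\<lambda>x. x + - c 0) ` range y" unfolding xs_def by auto
      have xsup: "is_fsup mu (range xs) (s + - c 0)" unfolding rx by (rule fsup_transl[OF ysup])
      have "s + - c 0 \<in> A"
      proof (rule sig[OF _ _ xsup])
        show "\<forall>n. 0 \<preceq> xs n \<and> xs n \<in> A"
        proof
          fix n
          have "0 \<preceq> y n - c 0" using c0y le_diff_iff by blast
          moreover have "xs n \<in> A" unfolding xs_def using subspace_add[OF sub yA subspace_neg[OF sub cA]] .
          ultimately show "0 \<preceq> xs n \<and> xs n \<in> A" by (simp add: xs_def)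
        qed
        show "\<forall>n. xs n \<preceq> xs (Suc n)" unfolding xs_def using ymono le_add by blast
      qed
      then have "s + - c 0 + c 0 \<in> A" using subspace_add[OF sub _ cA] by blast
      then show ?thesis by simp
    qed
  qed
qed

end



locale FRA = FR +
  assumes AR: "fuzzy_archimedean mu"
begin

lemma arch: assumes g0: "0 \<preceq> g" and h: "\<And>m::nat. real m *\<^sub>R g \<preceq> u" shows "g = 0"
proof (rule ccontr)
  assume ne: "g \<noteq> 0"
  have "fub mu {c *\<^sub>R g | c::real. c > 0} u"
    unfolding fub_def
  proof
    fix a assume "a \<in> {c *\<^sub>R g | c::real. c > 0}"
    then obtain c where a: "a = c *\<^sub>R g" and c: "c > 0" by blast
    have "c \<le> real (nat \<lceil>c\<rceil>)" by linarith
    then have "c *\<^sub>R g \<preceq> real (nat \<lceil>c\<rceil>) *\<^sub>R g" by (rule scale_le_scale[OF g0])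
    then show "a \<preceq> u" using a h le_trans by blast
  qed
  then show False using AR ne g0 unfolding fuzzy_archimedean_def by blast
qed

lemma subspace_iff: "subspace S \<longleftrightarrow> 0 \<in> S \<and> (\<forall>x\<in>S. \<forall>y\<in>S. x + y \<in> S) \<and> (\<forall>c. \<forall>x\<in>S. c *\<^sub>R x \<in> S)"
  by (simp add: subspace_def)

end


context FRA begin

lemma countable_disj:
  assumes bands: "\<forall>A. fuzzy_sigma_ideal mu A \<longrightarrow> fuzzy_band mu A"
  and u0: "0 \<preceq> u"
  and E: "\<And>e. e \<in> E \<Longrightarrow> 0 \<preceq> e \<and> e \<noteq> 0 \<and> e \<preceq> u"
  and disj: "\<And>e1 e2. e1 \<in> E \<Longrightarrow> e2 \<in> E \<Longrightarrow> e1 \<noteq> e2 \<Longrightarrow> meet e1 e2 = 0"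
  shows "countable E"
proof -
  define I where "I = {x. \<exists>F \<subseteq> E. countable F \<and> (\<forall>e \<in> E - F. meet (fabs mu x) e = 0)}"
  have e0: "\<And>e. e \<in> E \<Longrightarrow> 0 \<preceq> e" using E by blast
  have Isolid: "\<And>x y. fabs mu x \<preceq> fabs mu y \<Longrightarrow> y \<in> I \<Longrightarrow> x \<in> I"
  proof -
    fix x y assume xy: "fabs mu x \<preceq> fabs mu y" and y: "y \<in> I"
    then obtain F where F: "F \<subseteq> E" "countable F" "\<forall>e \<in> E - F. meet (fabs mu y) e = 0"
      unfolding I_def by blast
    have "\<forall>e \<in> E - F. meet (fabs mu x) e = 0"
      using F(3) disj_le[OF abs_pos e0 xy] by blast
    then show "x \<in> I" unfolding I_def using F(1,2) by blast
  qed
  have Isub: "subspace I"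
    unfolding subspace_iff
  proof (intro conjI ballI allI)
    show "0 \<in> I" unfolding I_def using meet_eq_left[OF e0] by auto
  next
    fix x y assume x: "x \<in> I" and y: "y \<in> I"
    obtain F1 where F1: "F1 \<subseteq> E" "countable F1" "\<forall>e \<in> E - F1. meet (fabs mu x) e = 0"
      using x unfolding I_def by blast
    obtain F2 where F2: "F2 \<subseteq> E" "countable F2" "\<forall>e \<in> E - F2. meet (fabs mu y) e = 0"
      using y unfolding I_def by blast
    have "\<forall>e \<in> E - (F1 \<union> F2). meet (fabs mu (x + y)) e = 0"
    proof
      fix e assume e: "e \<in> E - (F1 \<union> F2)"
      have "meet (fabs mu x + fabs mu y) e = 0"
        using D2[OF abs_pos abs_pos e0] e F1(3) F2(3) by blast
      then show "meet (fabs mu (x + y)) e = 0"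
        using disj_le[OF abs_pos e0 abs_add] e by blast
    qed
    then show "x + y \<in> I" unfolding I_def using F1 F2 by blast
  next
    fix c :: real and x assume x: "x \<in> I"
    obtain F where F: "F \<subseteq> E" "countable F" "\<forall>e \<in> E - F. meet (fabs mu x) e = 0"
      using x unfolding I_def by blast
    let ?n = "nat \<lceil>\<bar>c\<bar>\<rceil>"
    have "\<bar>c\<bar> \<le> real ?n" by linarith
    then have le: "fabs mu (c *\<^sub>R x) \<preceq> real ?n *\<^sub>R fabs mu x"
      using abs_scale scale_le_scale[OF abs_pos] le_trans by blast
    have "\<forall>e \<in> E - F. meet (fabs mu (c *\<^sub>R x)) e = 0"
    proof
      fix e assume e: "e \<in> E - F"
      have "meet (real ?n *\<^sub>R fabs mu x) e = 0" using D_nat[OF abs_pos e0] e F(3) by blast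
      then show "meet (fabs mu (c *\<^sub>R x)) e = 0" using disj_le[OF abs_pos e0 le] e by blast
    qed
    then show "c *\<^sub>R x \<in> I" unfolding I_def using F by blast
  qed
  have Iideal: "fuzzy_ideal mu I" unfolding fuzzy_ideal_def using Isub Isolid by blast
  have Isig: "fuzzy_sigma_ideal mu I"
    unfolding fuzzy_sigma_ideal_def
  proof (intro conjI allI impI)
    show "fuzzy_ideal mu I" by (rule Iideal)
    fix xs x assume h: "(\<forall>n. 0 \<preceq> xs n \<and> xs n \<in> I) \<and> (\<forall>n. xs n \<preceq> xs (Suc n)) \<and> is_fsup mu (range xs) x"
    have "\<forall>n. \<exists>F. F \<subseteq> E \<and> countable F \<and> (\<forall>e \<in> E - F. meet (fabs mu (xs n)) e = 0)"
      using h unfolding I_def by blast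
    then obtain Fn where Fn: "\<And>n. Fn n \<subseteq> E \<and> countable (Fn n) \<and> (\<forall>e \<in> E - Fn n. meet (fabs mu (xs n)) e = 0)"
      by metis
    let ?F = "\<Union>n. Fn n"
    have xsx: "xs n \<preceq> x" for n using h unfolding is_fsup_def fub_def by blast
    have x0: "0 \<preceq> x" using h xsx[of 0] le_trans by blast
    have "\<forall>e \<in> E - ?F. meet (fabs mu x) e = 0"
    proof
      fix e assume e: "e \<in> E - ?F"
      let ?t = "meet x e"
      have "xs n \<preceq> x - ?t" for n
      proof -
        have d: "0 \<preceq> x - xs n" using xsx le_diff_iff by blast
        have xe: "meet (xs n) e = 0" using Fn[of n] e h abs_of_pos by auto
        have "meet (x - xs n + xs n) e \<preceq> x - xs n + meet (xs n) e" by (rule D1[OF d])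
        then have "?t \<preceq> x - xs n" using xe by simp
        then have "?t + xs n \<preceq> x" using le_sub_right by blast
        then have "xs n + ?t \<preceq> x" by (simp add: add.commute)
        then show ?thesis using le_sub_right by blast
      qed
      then have "x \<preceq> x - ?t" using h unfolding is_fsup_def fub_def by blast
      then have "x + ?t \<preceq> x + 0" using le_sub_right by simp
      then have "?t \<preceq> 0" using le_add_iff2 by blast
      moreover have "0 \<preceq> ?t" using meet_pos[OF x0 e0] e by blast
      ultimately have "?t = 0" by (rule le_antisym)
      then show "meet (fabs mu x) e = 0" using abs_of_pos[OF x0] by simp
    qed
    moreover have "?F \<subseteq> E" "countable ?F" using Fn by auto
    ultimately show "x \<in> I" unfolding I_def by blast
  qed
  have Iband: "\<And>B s. B \<subseteq> I \<Longrightarrow> is_fsup mu B s \<Longrightarrow> s \<in> I"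
    using bands Isig unfolding fuzzy_band_def by blast
  have eI: "e \<in> I" if e: "e \<in> E" for e
  proof -
    have "\<forall>e' \<in> E - {e}. meet (fabs mu e) e' = 0" using disj e abs_of_pos[OF e0[OF e]] by auto
    then show ?thesis unfolding I_def using e by blast
  qed
  define B where "B = {x \<in> I. 0 \<preceq> x \<and> x \<preceq> u}"
  have Bsup: "is_fsup mu B u"
    unfolding is_fsup_def fub_def
  proof (intro conjI allI impI ballI)
    fix x assume "x \<in> B" then show "x \<preceq> u" unfolding B_def by blast
  next
    fix w assume w: "\<forall>a\<in>B. a \<preceq> w"
    let ?w = "meet w u"
    have wB: "\<forall>a\<in>B. a \<preceq> ?w" using w unfolding B_def by (auto simp: le_meet_iff)
    define z where "z = u - ?w"
    have z0: "0 \<preceq> z" unfolding z_def using meet_le2 le_diff_iff by blast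
    have K: "meet x z = 0" if xI: "x \<in> I" and x0: "0 \<preceq> x" for x
    proof -
      let ?g = "meet x z"
      have g0: "0 \<preceq> ?g" by (rule meet_pos[OF x0 z0])
      have "real m *\<^sub>R ?g \<preceq> u" for m
      proof (induction m)
        case 0 then show ?case using u0 by simp
      next
        case (Suc m)
        let ?y = "meet (real m *\<^sub>R x) u"
        have mx0: "0 \<preceq> real m *\<^sub>R x" by (rule pos_scale[OF x0]) simp
        have y0: "0 \<preceq> ?y" by (rule meet_pos[OF mx0 u0])
        have mxI: "real m *\<^sub>R x \<in> I" using Isub xI unfolding subspace_iff by blast
        have "fabs mu ?y \<preceq> fabs mu (real m *\<^sub>R x)"
          using abs_of_pos[OF y0] abs_of_pos[OF mx0] meet_le1 by simp
        then have "?y \<in> I" using Isolid mxI by blast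
        then have "?y \<in> B" unfolding B_def using y0 meet_le2 by blast
        then have yw: "?y \<preceq> ?w" using wB by blast
        have "real m *\<^sub>R ?g \<preceq> real m *\<^sub>R x" by (rule le_scale_nonneg[OF meet_le1]) simp
        then have "real m *\<^sub>R ?g \<preceq> ?y" using Suc.IH by (simp add: le_meet_iff)
        then have "real m *\<^sub>R ?g \<preceq> u - z" using yw unfolding z_def by (simp add: le_trans)
        moreover have "u - z \<preceq> u - ?g"
        proof -
          have "- z \<preceq> - ?g" using meet_le2 le_neg_iff by blast
          then have "u + - z \<preceq> u + - ?g" using le_add_iff2 by blast
          then show ?thesis by simp
        qed
        ultimately have "real m *\<^sub>R ?g \<preceq> u - ?g" using le_trans by blast
        then have "real m *\<^sub>R ?g + ?g \<preceq> u" using le_sub_right by blast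
        then show ?case by (simp add: algebra_simps)
      qed
      then show ?thesis using arch[OF g0] by blast
    qed
    have "\<forall>e \<in> E - {}. meet (fabs mu z) e = 0"
      using K[OF eI e0] abs_of_pos[OF z0] meet_comm by auto
    then have "z \<in> I" unfolding I_def by blast
    then have "meet z z = 0" using K z0 by blast
    then have "z = 0" by simp
    then have "?w = u" unfolding z_def by simp
    then show "u \<preceq> w" using meet_le1[of w u] by simp
  qed
  have "B \<subseteq> I" unfolding B_def by blast
  then have "u \<in> I" using Iband Bsup by blast
  then obtain F where F: "F \<subseteq> E" "countable F" "\<forall>e \<in> E - F. meet (fabs mu u) e = 0"
    unfolding I_def by blast
  have "E \<subseteq> F"
  proof
    fix e assume e: "e \<in> E"
    show "e \<in> F"
    proof (rule ccontr)
      assume "e \<notin> F"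
      then have "meet u e = 0" using F(3) e abs_of_pos[OF u0] by auto
      moreover have "meet u e = e" using meet_comm meet_eq_left E[OF e] by metis
      ultimately show False using E[OF e] by simp
    qed
  qed
  then show ?thesis using F(2) countable_subset by blast
qed

end


context FRA begin

lemma band_csp:
  assumes bands: "\<forall>A. fuzzy_sigma_ideal mu A \<longrightarrow> fuzzy_band mu A"
  shows "fuzzy_countable_sup mu"
  unfolding fuzzy_countable_sup_def
proof (intro allI impI)
  fix A s assume sA: "is_fsup mu A s"
  have As: "\<And>a. a \<in> A \<Longrightarrow> a \<preceq> s" using sA unfolding is_fsup_def fub_def by blast
  have Aleast: "\<And>v. (\<And>a. a \<in> A \<Longrightarrow> a \<preceq> v) \<Longrightarrow> s \<preceq> v" using sA unfolding is_fsup_def fub_def by blast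
  show "\<exists>B\<subseteq>A. countable B \<and> is_fsup mu B s"
  proof (cases "A = {}")
    case True then show ?thesis using sA by blast
  next
    case False
    then obtain a0 where a0: "a0 \<in> A" by blast
    define u where "u = s - a0"
    have u0: "0 \<preceq> u" unfolding u_def using As[OF a0] le_diff_iff by blast
    define r where "r n = (1 / real (Suc n)) *\<^sub>R u" for n
    have r0: "0 \<preceq> r n" for n unfolding r_def by (rule pos_scale[OF u0]) simp
    have ru: "r n \<preceq> u" for n
      unfolding r_def using scale_le_scale[OF u0, of "1 / real (Suc n)" 1] by simp
    define q where "q n a = join (a - s + r n) 0" for n a
    have qr: "q n a \<preceq> r n" if a: "a \<in> A" for n a
    proof -
      have "a - s \<preceq> 0" using As[OF a] le_diff_iff2 by blast
      then have "a - s + r n \<preceq> 0 + r n" by (rule le_add)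
      then show ?thesis unfolding q_def using r0 by (simp add: join_le_iff)
    qed
    define P where "P n = {e. 0 \<preceq> e \<and> e \<noteq> 0 \<and> (\<exists>a\<in>A. e \<preceq> q n a)}" for n
    define DJ where "DJ n = {E. E \<subseteq> P n \<and> (\<forall>e1\<in>E. \<forall>e2\<in>E. e1 \<noteq> e2 \<longrightarrow> meet e1 e2 = 0)}" for n
    have "\<exists>M\<in>DJ n. \<forall>X\<in>DJ n. M \<subseteq> X \<longrightarrow> X = M" for n
    proof (rule Zorn_Lemma, intro ballI)
      fix C assume C: "C \<in> chains (DJ n)"
      then have CD: "C \<subseteq> DJ n" and ch: "\<And>X Y. X \<in> C \<Longrightarrow> Y \<in> C \<Longrightarrow> X \<subseteq> Y \<or> Y \<subseteq> X"
        unfolding chains_def chain_subset_def by auto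
      show "\<Union>C \<in> DJ n"
        unfolding DJ_def
      proof (intro CollectI conjI ballI impI)
        show "\<Union>C \<subseteq> P n" using CD unfolding DJ_def by blast
        fix e1 e2 assume e1: "e1 \<in> \<Union>C" and e2: "e2 \<in> \<Union>C" and ne: "e1 \<noteq> e2"
        then obtain X Y where X: "X \<in> C" "e1 \<in> X" and Y: "Y \<in> C" "e2 \<in> Y" by blast
        show "meet e1 e2 = 0"
        proof (cases "X \<subseteq> Y")
          case True
          then show ?thesis using CD Y X ne unfolding DJ_def by blast
        next
          case False
          then have "Y \<subseteq> X" using ch[OF X(1) Y(1)] by blast
          then show ?thesis using CD Y X ne unfolding DJ_def by blast
        qed
      qed
    qed
    then obtain E where EDJ: "\<And>n. E n \<in> DJ n" and Emax: "\<And>n X. X \<in> DJ n \<Longrightarrow> E n \<subseteq> X \<Longrightarrow> X = E n"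
      by metis
    have EP: "\<And>n e. e \<in> E n \<Longrightarrow> e \<in> P n" using EDJ unfolding DJ_def by blast
    have Edisj: "\<And>n e1 e2. e1 \<in> E n \<Longrightarrow> e2 \<in> E n \<Longrightarrow> e1 \<noteq> e2 \<Longrightarrow> meet e1 e2 = 0"
      using EDJ unfolding DJ_def by blast
    have Ecount: "countable (E n)" for n
    proof (rule countable_disj[OF bands u0 _ Edisj])
      fix e assume e: "e \<in> E n"
      then obtain a where a: "a \<in> A" "e \<preceq> q n a" and e0: "0 \<preceq> e" "e \<noteq> 0"
        using EP unfolding P_def by blast
      have "e \<preceq> u" using le_trans[OF a(2) le_trans[OF qr[OF a(1)] ru]] .
      then show "0 \<preceq> e \<and> e \<noteq> 0 \<and> e \<preceq> u" using e0 by blast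
    qed
    have "\<forall>n e. \<exists>a. e \<in> E n \<longrightarrow> a \<in> A \<and> e \<preceq> q n a" using EP unfolding P_def by blast
    then obtain sel where sel: "\<And>n e. e \<in> E n \<Longrightarrow> sel n e \<in> A \<and> e \<preceq> q n (sel n e)"
      by metis
    define C where "C = insert a0 (\<Union>n. sel n ` E n)"
    have CA: "C \<subseteq> A" unfolding C_def using a0 sel by blast
    have cC: "countable C" unfolding C_def using Ecount by auto
    have "is_fsup mu C s"
      unfolding is_fsup_def fub_def
    proof (intro conjI allI impI ballI)
      fix c assume "c \<in> C" then show "c \<preceq> s" using CA As by blast
    next
      fix w assume w: "\<forall>a\<in>C. a \<preceq> w"
      let ?w = "meet w s"
      have Cw: "c \<preceq> ?w" if "c \<in> C" for c using w that CA As by (simp add: le_meet_iff subset_iff)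
      have a0w: "a0 \<preceq> ?w" using Cw unfolding C_def by blast
      define z where "z = s - ?w"
      have z0: "0 \<preceq> z" unfolding z_def using meet_le2 le_diff_iff by blast
      have zu: "z \<preceq> u"
      proof -
        have "- ?w \<preceq> - a0" using a0w le_neg_iff by blast
        then have "s + - ?w \<preceq> s + - a0" using le_add_iff2 by blast
        then show ?thesis unfolding z_def u_def by simp
      qed
      have zr: "z \<preceq> r n" for n
      proof -
        define f where "f = join (z - r n) 0"
        have f0: "0 \<preceq> f" unfolding f_def by (rule join_pos)
        have fdisj: "meet f e = 0" if e: "e \<in> E n" for e
        proof -
          define a where "a = sel n e"
          have aA: "a \<in> A" and eq: "e \<preceq> q n a" using sel[OF e] unfolding a_def by auto
          have "a \<in> C" unfolding C_def a_def using e by blast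
          then have aw: "a \<preceq> ?w" by (rule Cw)
          define p where "p = a - s + r n"
          have "- ?w \<preceq> - a" using aw le_neg_iff by blast
          then have "- ?w + (s - r n) \<preceq> - a + (s - r n)" by (rule le_add)
          then have "z - r n \<preceq> - p" unfolding z_def p_def by (simp add: algebra_simps)
          then have ff: "f \<preceq> join (- p) 0" unfolding f_def by (rule join_mono)
          have e0: "0 \<preceq> e" using EP[OF e] unfolding P_def by blast
          have 1: "meet f e \<preceq> meet (join (- p) 0) e" by (rule meet_mono[OF ff])
          have 2: "meet (join (- p) 0) e \<preceq> meet (join (- p) 0) (join p 0)"
            using eq unfolding q_def p_def by (rule meet_mono2)
          have 3: "meet (join (- p) 0) (join p 0) = 0" using pos_neg_disj meet_comm by metis
          have "meet f e \<preceq> 0" using le_trans[OF 1 2] 3 by simp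
          moreover have "0 \<preceq> meet f e" by (rule meet_pos[OF f0 e0])
          ultimately show ?thesis by (rule le_antisym)
        qed
        have "f = 0"
        proof (rule ccontr)
          assume fne: "f \<noteq> 0"
          show False
          proof (cases "\<exists>a\<in>A. meet f (q n a) \<noteq> 0")
            case True
            then obtain a where aA: "a \<in> A" and ne: "meet f (q n a) \<noteq> 0" by blast
            define e' where "e' = meet f (q n a)"
            have e'0: "0 \<preceq> e'" unfolding e'_def q_def by (rule meet_pos[OF f0 join_pos])
            have e'P: "e' \<in> P n" unfolding P_def using e'0 ne aA meet_le2 unfolding e'_def by blast
            have e'f: "e' \<preceq> f" unfolding e'_def by (rule meet_le1)
            have e'd: "meet e' e = 0" if e: "e \<in> E n" for e
            proof -
              have e0: "0 \<preceq> e" using EP[OF e] unfolding P_def by blast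
              show ?thesis using disj_le[OF e'0 e0 e'f fdisj[OF e]] .
            qed
            have notin: "e' \<notin> E n"
            proof
              assume "e' \<in> E n"
              then have "meet f e' = 0" by (rule fdisj)
              moreover have "meet f e' = e'" using meet_comm meet_eq_left[OF e'f] by metis
              ultimately show False using ne unfolding e'_def by simp
            qed
            have "insert e' (E n) \<in> DJ n"
              unfolding DJ_def
            proof (intro CollectI conjI ballI impI)
              show "insert e' (E n) \<subseteq> P n" using e'P EP by blast
              fix e1 e2 assume e1: "e1 \<in> insert e' (E n)" and e2: "e2 \<in> insert e' (E n)" and ne12: "e1 \<noteq> e2"
              show "meet e1 e2 = 0"
                using e1 e2 ne12 e'd Edisj meet_comm by (metis insert_iff)
            qed
            then have "insert e' (E n) = E n" using Emax by blast
            then show False using notin by blast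
          next
            case False
            define h where "h = meet f (r n)"
            have h0: "0 \<preceq> h" unfolding h_def by (rule meet_pos[OF f0 r0])
            have "a \<preceq> s - h" if aA: "a \<in> A" for a
            proof -
              have q0: "0 \<preceq> q n a" unfolding q_def by (rule join_pos)
              have 1: "meet (q n a) h \<preceq> meet (q n a) f" unfolding h_def by (rule meet_mono2[OF meet_le1])
              have 2: "meet (q n a) f = 0" using False aA meet_comm by metis
              have "meet (q n a) h = 0" using 1 2 meet_pos[OF q0 h0] le_antisym by simp
              then have "q n a + h \<preceq> r n" using disj_bounded qr[OF aA] meet_le2 unfolding h_def by blast
              moreover have "a - s + r n + h \<preceq> q n a + h" unfolding q_def by (rule le_add[OF join_ge1])
              ultimately have "a - s + r n + h \<preceq> r n" using le_trans by blast
              then have "a - s + r n + h + (s - r n - h) \<preceq> r n + (s - r n - h)" by (rule le_add)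
              then show ?thesis by (simp add: algebra_simps)
            qed
            then have "s \<preceq> s - h" using Aleast by blast
            then have "s + h \<preceq> s + 0" using le_sub_right by simp
            then have "h \<preceq> 0" using le_add_iff2 by blast
            then have hz: "h = 0" using h0 le_antisym by blast
            have fu: "f \<preceq> u"
            proof -
              have "z - r n \<preceq> z" using le_sub_left le_add_pos[OF r0] by blast
              then show ?thesis unfolding f_def using zu u0 le_trans by (simp add: join_le_iff)
            qed
            let ?c = "1 / real (Suc n)"
            have "?c *\<^sub>R f \<preceq> r n" unfolding r_def by (rule le_scale_nonneg[OF fu]) simp
            moreover have "?c *\<^sub>R f \<preceq> 1 *\<^sub>R f" by (rule scale_le_scale[OF f0]) simp
            ultimately have "?c *\<^sub>R f \<preceq> h" unfolding h_def by (simp add: le_meet_iff)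
            then have "?c *\<^sub>R f \<preceq> 0" using hz by simp
            then have "real (Suc n) *\<^sub>R (?c *\<^sub>R f) \<preceq> real (Suc n) *\<^sub>R 0" by (rule le_scale_nonneg) simp
            then have "f \<preceq> 0" by simp
            then show False using f0 fne le_antisym by blast
          qed
        qed
        then have "z - r n \<preceq> 0" using join_ge1[of "z - r n" 0] unfolding f_def by simp
        then show ?thesis using le_diff_iff2 by blast
      qed
      have "real m *\<^sub>R z \<preceq> u" for m
      proof (cases m)
        case 0 then show ?thesis using u0 by simp
      next
        case (Suc n)
        have "real (Suc n) *\<^sub>R z \<preceq> real (Suc n) *\<^sub>R r n" by (rule le_scale_nonneg[OF zr]) simp
        then show ?thesis using Suc unfolding r_def by simp
      qed
      then have "z = 0" using arch[OF z0] by blast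
      then have "?w = s" unfolding z_def by simp
      then show "s \<preceq> w" using meet_le1[of w s] by simp
    qed
    then show ?thesis using CA cC by blast
  qed
qed

end

theorem theorem4p10:
  fixes \<mu> :: "'a::real_vector \<Rightarrow> 'a \<Rightarrow> real"
  assumes "fuzzy_riesz_space \<mu>" and "fuzzy_archimedean \<mu>"
  shows "fuzzy_countable_sup \<mu> \<longleftrightarrow> (\<forall>A. fuzzy_sigma_ideal \<mu> A \<longrightarrow> fuzzy_band \<mu> A)"
proof -
  interpret FRA \<mu> using assms by (unfold_locales)
  show ?thesis using csp_band band_csp by blast
qed



end
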